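(* Let $d<n$, let $\sigma\in\mathbb R^{d\times n}$ have full rank $d$, $A\in\mathbb R^{n\times n}$ symmetric positive definite, $h>0$, $Z\in\mathbb R^n$, and $\xi\in\mathrm{Im}\,\sigma^{\mathrm{tr}}$. Let $\alpha'>0$ be such that $x^{\mathrm{tr}}A^{-1}x\ge\alpha'|x|^2$ for all $x\in\mathbb R^n$, and assume $|\xi|<h\sqrt{\alpha'}$ and $A^{-1}(\mathrm{Ker}\,\sigma)=\mathrm{Ker}\,\sigma$. Then $\bar\phi:=\Pi(Z)+\big(\Pi^\perp(Z)^{\mathrm{tr}}A^{-1}\Pi^\perp(Z)\big)^{1/2}\big(h^2-\xi^{\mathrm{tr}}A\xi\big)^{-1/2}A\xi$ is the unique minimizer over $\phi\in\mathrm{Im}\,\sigma^{\mathrm{tr}}$ of $F(\phi):=-\xi^{\mathrm{tr}}\phi+h\big((Z-\phi)^{\mathrm{tr}}A^{-1}(Z-\phi)\big)^{1/2}$.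
   Context: $\Pi$ and $\Pi^\perp$ denote the orthogonal projections of $\mathbb R^n$ onto $\mathrm{Im}\,\sigma^{\mathrm{tr}}$ and $\mathrm{Ker}\,\sigma$, respectively. *)

theory Defs
  imports "HOL-Analysis.Analysis"
begin

definition orth_proj :: "(real^'n) set \<Rightarrow> real^'n \<Rightarrow> real^'n" where
  "orth_proj S x = (THE p. p \<in> S \<and> (\<forall>y\<in>S. (x - p) \<bullet> y = 0))"

definition im_tr :: "real^'n^'d \<Rightarrow> (real^'n) set" where
  "im_tr \<sigma> = range (\<lambda>y. transpose \<sigma> *v y)"

definition ker :: "real^'n^'d \<Rightarrow> (real^'n) set" where
  "ker \<sigma> = {x. \<sigma> *v x = 0}"

end

theory Submission
  imports Defs
begin

lemma key_ineq:
  fixes h s q r a nN mM :: real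
  assumes "q > 0" "h > 0" "r \<ge> 0" "h^2 = s + q^2" "a^2 \<le> s*nN" "mM = nN - 2*(r / q)*a + (r / q)^2* s" "mM \<ge> 0"
    "nN \<ge> 0"
  shows "r*q \<le> -a + h* sqrt(nN + r^2)" and "-a + h* sqrt(nN+r^2) \<le> r*q \<Longrightarrow> mM = 0"
proof -
  have id: "h^2*(nN+r^2) - (a+r*q)^2 = (s*nN - a^2) + q^2*mM"
    using assms(1,4,6) by (simp add: field_simps power2_eq_square)
  have hs: "h* sqrt(nN + r^2) = sqrt (h^2*(nN+r^2))"
    using assms(2) by (simp add: real_sqrt_mult)
  have ge: "(a+r*q)^2 \<le> h^2*(nN+r^2)" using id assms(5,7) by (smt (verit) mult_nonneg_nonneg zero_le_power2)
  show 1: "r*q \<le> -a + h* sqrt(nN + r^2)"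
  proof (cases "a + r*q \<le> 0")
    case True then show ?thesis using assms(2,8) by (smt (verit) mult_nonneg_nonneg real_sqrt_ge_zero zero_le_power2)
  next
    case False
    then have "a + r*q = sqrt ((a+r*q)^2)" by simp
    also have "\<dots> \<le> sqrt (h^2*(nN+r^2))" using ge real_sqrt_le_mono by blast
    finally show ?thesis using hs by linarith
  qed
  assume le: "-a + h* sqrt(nN+r^2) \<le> r*q"
  have "h* sqrt(nN+r^2) \<le> a + r*q" using le by linarith
  moreover have "0 \<le> h* sqrt(nN+r^2)" using assms(2,8) by simp
  ultimately have "h^2*(nN+r^2) \<le> (a+r*q)^2" using hs
    by (metis power_mono real_sqrt_pow2 assms(8) mult_nonneg_nonneg zero_le_power2 add_nonneg_nonneg)
  then have "q^2*mM \<le> 0" using id assms(5) by linarith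
  then show "mM = 0" using assms(1,7) by (smt (verit) mult_pos_pos zero_less_power)
qed

lemma val_at:
  fixes h s q r :: real
  assumes "q > 0" "h > 0" "r \<ge> 0" "h^2 = s + q^2"
  shows "-((r / q)* s) + h* sqrt((r / q)^2* s + r^2) = r*q"
proof -
  have "(r / q)^2* s + r^2 = r^2*(s + q^2)/q^2" using assms by (simp add: field_simps power2_eq_square)
  also have "\<dots> = (r*h/q)^2" using assms(4) by (simp add: power_divide power_mult_distrib)
  finally have "sqrt((r / q)^2* s + r^2) = r*h/q" using assms by simp
  then have "-((r / q)* s) + h* sqrt((r / q)^2* s + r^2) = -((r / q)* s) + h*(r*h/q)"
    by (simp only:)
  also have "\<dots> = (r*(h^2 - s))/q" using assms(1)
    by (simp add: field_simps power2_eq_square)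
  also have "\<dots> = r*q" using assms(1,4) by (simp add: power2_eq_square)
  finally show ?thesis .
qed

lemma sym_inner:
  fixes A :: "real^'n^'n"
  assumes "transpose A = A"
  shows "(A *v x) \<bullet> y = x \<bullet> (A *v y)"
proof -
  have "x \<bullet> (A *v y) = (x v* A) \<bullet> y" by (simp add: dot_lmul_matrix)
  also have "x v* A = transpose A *v x" by simp
  finally show ?thesis using assms by simp
qed

lemma orth_proj_eq:
  fixes S :: "(real^'n) set"
  assumes "subspace S" "p \<in> S" "\<forall>y\<in>S. (x - p) \<bullet> y = 0"
  shows "orth_proj S x = p"
  unfolding orth_proj_def
proof (rule the_equality)
  show "p \<in> S \<and> (\<forall>y\<in>S. (x - p) \<bullet> y = 0)" using assms by blast
next
  fix q assume q: "q \<in> S \<and> (\<forall>y\<in>S. (x - q) \<bullet> y = 0)"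
  have d: "p - q \<in> S" using assms(1,2) q by (simp add: subspace_diff)
  have "(p - q) \<bullet> (p - q) = (x - q) \<bullet> (p - q) - (x - p) \<bullet> (p - q)"
    by (simp add: algebra_simps inner_diff_left)
  also have "\<dots> = 0" using d q assms(3) by simp
  finally show "q = p" by simp
qed

lemma quad_expand:
  fixes B :: "real^'n^'n"
  assumes "\<And>x y. (B *v x) \<bullet> y = x \<bullet> (B *v y)"
  shows "(u - c *\<^sub>R v) \<bullet> (B *v (u - c *\<^sub>R v)) = u \<bullet> (B *v u) - 2*c*(v \<bullet> (B *v u)) + c^2*(v \<bullet> (B *v v))"
proof -
  have "u \<bullet> (B *v v) = v \<bullet> (B *v u)" using assms[of v u] by (simp add: inner_commute)
  then show ?thesis
    by (simp add: algebra_simps inner_diff_left inner_diff_right matrix_vector_mult_diff_distrib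
        matrix_vector_mult_scaleR power2_eq_square)
qed

lemma quad_add:
  fixes B :: "real^'n^'n"
  assumes "\<And>x y. (B *v x) \<bullet> y = x \<bullet> (B *v y)" "x \<bullet> (B *v y) = 0"
  shows "(y - x) \<bullet> (B *v (y - x)) = y \<bullet> (B *v y) + x \<bullet> (B *v x)"
proof -
  have "y \<bullet> (B *v x) = 0" using assms(1)[of y x] assms(2) by (simp add: inner_commute)
  then show ?thesis using assms(2)
    by (simp add: algebra_simps inner_diff_left inner_diff_right matrix_vector_mult_diff_distrib)
qed


declare transpose_matrix_vector [simp del]

theorem lemma5p1:
  fixes \<sigma> :: "real^'n^'d" and A :: "real^'n^'n" and h \<alpha>' :: real
    and Z \<xi> :: "real^'n"
  assumes "CARD('d) < CARD('n)"
    and "rank \<sigma> = CARD('d)"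
    and "transpose A = A"
    and "\<forall>x. x \<noteq> 0 \<longrightarrow> x \<bullet> (A *v x) > 0"
    and "h > 0"
    and "\<xi> \<in> im_tr \<sigma>"
    and "\<alpha>' > 0"
    and "\<forall>x. x \<bullet> (matrix_inv A *v x) \<ge> \<alpha>' * (norm x)^2"
    and "norm \<xi> < h * sqrt \<alpha>'"
    and "(\<lambda>x. matrix_inv A *v x) ` ker \<sigma> = ker \<sigma>"
  shows
    "let F = (\<lambda>\<phi>. - (\<xi> \<bullet> \<phi>) + h * sqrt ((Z - \<phi>) \<bullet> (matrix_inv A *v (Z - \<phi>))));
         Pp = orth_proj (ker \<sigma>) Z;
         \<phi>b = orth_proj (im_tr \<sigma>) Z
               + (sqrt (Pp \<bullet> (matrix_inv A *v Pp)) / sqrt (h^2 - \<xi> \<bullet> (A *v \<xi>))) *\<^sub>R (A *v \<xi>)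
     in \<phi>b \<in> im_tr \<sigma> \<and> (\<forall>\<phi>\<in>im_tr \<sigma>. F \<phi>b \<le> F \<phi>)
        \<and> (\<forall>\<phi>\<in>im_tr \<sigma>. F \<phi> \<le> F \<phi>b \<longrightarrow> \<phi> = \<phi>b)"
proof -
  define B where "B = matrix_inv A"
  have injA: "\<forall>x. A *v x = 0 \<longrightarrow> x = 0"
    using assms(4) by (metis inner_zero_right less_irrefl)
  have "invertible A" using injA matrix_left_invertible_ker invertible_left_inverse by blast
  then have AB: "A ** B = mat 1 \<and> B ** A = mat 1"
    unfolding B_def matrix_inv_def invertible_def by (rule someI_ex)
  have ABx: "\<And>x. A *v (B *v x) = x" "\<And>x. B *v (A *v x) = x"
    using AB by (simp_all add: matrix_vector_mul_assoc)
  have Asym: "\<And>x y. (A *v x) \<bullet> y = x \<bullet> (A *v y)" using sym_inner[OF assms(3)] .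
  have Bsym: "(B *v x) \<bullet> y = x \<bullet> (B *v y)" for x y
  proof -
    have "(B *v x) \<bullet> y = (B *v x) \<bullet> (A *v (B *v y))" using ABx by simp
    also have "\<dots> = (A *v (B *v x)) \<bullet> (B *v y)" using Asym by simp
    also have "\<dots> = x \<bullet> (B *v y)" using ABx by simp
    finally show ?thesis .
  qed
  have Bbound: "x \<bullet> (B *v x) \<ge> \<alpha>' * (norm x)^2" for x using assms(8) B_def by simp
  have Bnn: "x \<bullet> (B *v x) \<ge> 0" for x
    using Bbound[of x] assms(7) by (smt (verit) mult_nonneg_nonneg zero_le_power2)
  have Bpos: "x = 0" if "x \<bullet> (B *v x) = 0" for x
  proof -
    have "\<alpha>' * (norm x)^2 \<le> 0" using Bbound[of x] that by simp
    then have "(norm x)^2 \<le> 0" using assms(7) by (simp add: mult_le_0_iff)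
    then show "x = 0" by simp
  qed
  have subI: "subspace (im_tr \<sigma>)"
    unfolding im_tr_def by (rule linear_subspace_image[OF matrix_vector_mul_linear subspace_UNIV])
  have subK: "subspace (ker \<sigma>)"
    unfolding ker_def subspace_def by (simp add: matrix_vector_right_distrib matrix_vector_mult_scaleR)
  have IK: "x \<bullet> k = 0" if xI: "x \<in> im_tr \<sigma>" and kK: "k \<in> ker \<sigma>" for x k
  proof -
    obtain y where y: "x = transpose \<sigma> *v y" using xI unfolding im_tr_def by auto
    have "x \<bullet> k = y \<bullet> (\<sigma> *v k)" unfolding y by (simp add: dot_lmul_matrix transpose_matrix_vector)
    also have "\<dots> = 0" using kK unfolding ker_def by simp
    finally show ?thesis .
  qed
  have orthK: "z \<in> ker \<sigma>" if "\<forall>x\<in>im_tr \<sigma>. z \<bullet> x = 0" for z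
  proof -
    have "transpose \<sigma> *v (\<sigma> *v z) \<in> im_tr \<sigma>" unfolding im_tr_def by simp
    then have "z \<bullet> (transpose \<sigma> *v (\<sigma> *v z)) = 0" using that by blast
    moreover have "z \<bullet> (transpose \<sigma> *v (\<sigma> *v z)) = (\<sigma> *v z) \<bullet> (\<sigma> *v z)"
      by (simp add: inner_commute[of z] dot_lmul_matrix transpose_matrix_vector)
    ultimately show ?thesis unfolding ker_def by simp
  qed
  have decomp: "\<exists>p\<in>im_tr \<sigma>. v - p \<in> ker \<sigma>" for v
  proof -
    obtain y z where yz: "y \<in> span (im_tr \<sigma>)" "\<And>w. w \<in> span (im_tr \<sigma>) \<Longrightarrow> orthogonal z w" "v = y + z"
      using orthogonal_subspace_decomp_exists by blast
    have sp: "span (im_tr \<sigma>) = im_tr \<sigma>" using subI by (simp add: span_eq_iff)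
    have "z \<in> ker \<sigma>" using orthK yz(2) sp unfolding orthogonal_def by auto
    then show ?thesis using yz sp by (intro bexI[of _ y]) auto
  qed
  have perpK: "v \<in> im_tr \<sigma>" if "\<forall>k\<in>ker \<sigma>. v \<bullet> k = 0" for v
  proof -
    obtain p where p: "p \<in> im_tr \<sigma>" "v - p \<in> ker \<sigma>" using decomp by blast
    have "(v - p) \<bullet> (v - p) = v \<bullet> (v - p) - p \<bullet> (v - p)" by (simp add: inner_diff_left)
    also have "\<dots> = 0" using that p IK by simp
    finally have "v = p" by simp
    then show ?thesis using p by simp
  qed
  have BK: "B *v k \<in> ker \<sigma>" if "k \<in> ker \<sigma>" for k
    using assms(10) that unfolding B_def by blast
  have KB: "\<exists>k'\<in>ker \<sigma>. k = B *v k'" if "k \<in> ker \<sigma>" for k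
    using assms(10) that unfolding B_def by (metis imageE)
  define w where "w = A *v \<xi>"
  have wI: "w \<in> im_tr \<sigma>"
  proof (rule perpK, intro ballI)
    fix k assume "k \<in> ker \<sigma>"
    then obtain k' where k': "k' \<in> ker \<sigma>" "k = B *v k'" using KB by blast
    have "w \<bullet> k = \<xi> \<bullet> (A *v (B *v k'))" unfolding w_def k' using Asym by simp
    also have "\<dots> = 0" using ABx IK assms(6) k' by simp
    finally show "w \<bullet> k = 0" .
  qed
  obtain P where P: "P \<in> im_tr \<sigma>" "Z - P \<in> ker \<sigma>" using decomp by blast
  have hP: "orth_proj (im_tr \<sigma>) Z = P"
    using orth_proj_eq[OF subI P(1)] IK P(2) by (simp add: inner_commute)
  have hQ: "orth_proj (ker \<sigma>) Z = Z - P"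
    using orth_proj_eq[OF subK P(2)] IK P(1) by simp
  define Q where "Q = Z - P"
  define c where "c = Q \<bullet> (B *v Q)"
  define s where "s = \<xi> \<bullet> (A *v \<xi>)"
  have c0: "c \<ge> 0" unfolding c_def by (rule Bnn)
  have Bw: "B *v w = \<xi>" unfolding w_def using ABx by simp
  have sw: "s = w \<bullet> (B *v w)" unfolding s_def w_def using ABx by (simp add: inner_commute)
  have s0: "s \<ge> 0" using sw Bnn by simp
  have sh: "s < h^2"
  proof (cases "w = 0")
    case True then show ?thesis using sw assms(5) by simp
  next
    case False
    then have nw: "norm w > 0" by simp
    have s1: "s \<le> norm \<xi> * norm w" unfolding s_def w_def[symmetric] by (rule norm_cauchy_schwarz)
    have s2: "\<alpha>' * (norm w)^2 \<le> s" using sw Bbound by simp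
    have "(norm \<xi>)^2 < (h * sqrt \<alpha>')^2"
      using assms(9) by (simp add: power_strict_mono)
    then have s3: "(norm \<xi>)^2 < h^2 * \<alpha>'" using assms(7) by (simp add: power_mult_distrib)
    have "\<alpha>' * norm w * norm w \<le> norm \<xi> * norm w" using s1 s2 by (simp add: power2_eq_square)
    then have s4: "\<alpha>' * norm w \<le> norm \<xi>" using nw by simp
    have "s * \<alpha>' \<le> norm \<xi> * norm w * \<alpha>'" using s1 assms(7) by simp
    also have "\<dots> = norm \<xi> * (\<alpha>' * norm w)" by simp
    also have "\<dots> \<le> norm \<xi> * norm \<xi>" using s4 by (simp add: mult_left_mono)
    also have "\<dots> < h^2 * \<alpha>'" using s3 by (simp add: power2_eq_square)
    finally show ?thesis using assms(7) by simp
  qed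
  define t where "t = h^2 - s"
  define r where "r = sqrt c"
  define q where "q = sqrt t"
  define k where "k = r / q"
  have t0: "t > 0" using sh t_def by simp
  have q0: "q > 0" using t0 q_def by simp
  have hq: "h^2 = s + q^2" using t0 unfolding q_def t_def by simp
  have r0: "r \<ge> 0" using c0 r_def by simp
  have rc: "r^2 = c" using c0 r_def by simp
  have CS: "(w \<bullet> (B *v u))^2 \<le> s * (u \<bullet> (B *v u))" for u
  proof (cases "s = 0")
    case True
    then have "w = 0" using sw Bpos by simp
    then show ?thesis using True by simp
  next
    case False
    then have sp: "s > 0" using s0 by simp
    define a where "a = w \<bullet> (B *v u)"
    have "0 \<le> (u - (a/s) *\<^sub>R w) \<bullet> (B *v (u - (a/s) *\<^sub>R w))" by (rule Bnn)
    also have "\<dots> = u \<bullet> (B *v u) - 2*(a/s)*a + (a/s)^2 * s"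
      using quad_expand[OF Bsym] sw a_def by simp
    also have "\<dots> = u \<bullet> (B *v u) - a^2/s" using sp by (simp add: field_simps power2_eq_square)
    finally have "a^2/s \<le> u \<bullet> (B *v u)" by simp
    then show ?thesis using sp unfolding a_def by (simp add: field_simps)
  qed
  define G where "G = (\<lambda>u. - (w \<bullet> (B *v u)) + h * sqrt (u \<bullet> (B *v u) + r^2))"
  have Gkw: "G (k *\<^sub>R w) = r * q"
  proof -
    have "G (k *\<^sub>R w) = -((r / q) * s) + h * sqrt ((r / q)^2 * s + r^2)"
      unfolding G_def k_def using sw by (simp add: matrix_vector_mult_scaleR power2_eq_square)
    also have "\<dots> = r * q" using val_at[OF q0 assms(5) r0 hq] .
    finally show ?thesis .
  qed
  have Gge: "r * q \<le> G u" and Geq: "G u \<le> r * q \<Longrightarrow> u = k *\<^sub>R w" for u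
  proof -
    define M where "M = (u - k *\<^sub>R w) \<bullet> (B *v (u - k *\<^sub>R w))"
    have Me: "M = u \<bullet> (B *v u) - 2*(r / q)*(w \<bullet> (B *v u)) + (r / q)^2 * s"
      unfolding M_def k_def using quad_expand[OF Bsym] sw by simp
    have M0: "M \<ge> 0" unfolding M_def by (rule Bnn)
    note ki = key_ineq[OF q0 assms(5) r0 hq CS Me M0 Bnn]
    show "r * q \<le> G u" using ki(1) unfolding G_def by simp
    assume "G u \<le> r * q"
    then have "M = 0" using ki(2) unfolding G_def by simp
    then have "u - k *\<^sub>R w = 0" unfolding M_def by (rule Bpos)
    then show "u = k *\<^sub>R w" by simp
  qed
  define F where "F = (\<lambda>\<phi>. - (\<xi> \<bullet> \<phi>) + h * sqrt ((Z - \<phi>) \<bullet> (B *v (Z - \<phi>))))"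
  have FG: "F \<phi> = - (\<xi> \<bullet> P) + G (\<phi> - P)" if "\<phi> \<in> im_tr \<sigma>" for \<phi>
  proof -
    have uI: "\<phi> - P \<in> im_tr \<sigma>" using subI that P(1) by (simp add: subspace_diff)
    have z: "Z - \<phi> = Q - (\<phi> - P)" unfolding Q_def by simp
    have "(\<phi> - P) \<bullet> (B *v Q) = 0" using IK uI BK P(2) Q_def by simp
    then have e1: "(Z - \<phi>) \<bullet> (B *v (Z - \<phi>)) = (\<phi> - P) \<bullet> (B *v (\<phi> - P)) + r^2"
      unfolding z using quad_add[OF Bsym] rc c_def by simp
    have e2: "w \<bullet> (B *v (\<phi> - P)) = \<xi> \<bullet> (\<phi> - P)" using Bsym[of w] Bw by simp
    show ?thesis unfolding F_def G_def e1 e2 by (simp add: inner_diff_right)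
  qed
  define \<phi>b where "\<phi>b = orth_proj (im_tr \<sigma>) Z
               + (sqrt (orth_proj (ker \<sigma>) Z \<bullet> (B *v orth_proj (ker \<sigma>) Z)) / sqrt (h^2 - \<xi> \<bullet> (A *v \<xi>))) *\<^sub>R (A *v \<xi>)"
  have phib: "\<phi>b = P + k *\<^sub>R w"
    unfolding \<phi>b_def hP hQ k_def r_def q_def c_def Q_def t_def s_def w_def ..
  have phibI: "\<phi>b \<in> im_tr \<sigma>"
    unfolding phib using subI P(1) wI by (simp add: subspace_add subspace_scale)
  have Fb: "F \<phi>b = - (\<xi> \<bullet> P) + r * q" using FG[OF phibI] Gkw phib by simp
  have final: "\<phi>b \<in> im_tr \<sigma> \<and> (\<forall>\<phi>\<in>im_tr \<sigma>. F \<phi>b \<le> F \<phi>)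
        \<and> (\<forall>\<phi>\<in>im_tr \<sigma>. F \<phi> \<le> F \<phi>b \<longrightarrow> \<phi> = \<phi>b)"
  proof (intro conjI ballI impI)
    show "\<phi>b \<in> im_tr \<sigma>" by (rule phibI)
  next
    fix \<phi> assume "\<phi> \<in> im_tr \<sigma>"
    then show "F \<phi>b \<le> F \<phi>" using FG Fb Gge by simp
  next
    fix \<phi> assume f: "\<phi> \<in> im_tr \<sigma>" "F \<phi> \<le> F \<phi>b"
    then have "G (\<phi> - P) \<le> r * q" using FG Fb by simp
    then have "\<phi> - P = k *\<^sub>R w" by (rule Geq)
    then show "\<phi> = \<phi>b" unfolding phib by (simp add: algebra_simps)
  qed
  then show ?thesis unfolding Let_def F_def \<phi>b_def B_def by simp
qed

end
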